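(* Let $F$ be a cumulative distribution function on $[0,\infty)$ with a density and finite positive mean $\mu$. Let $B,S$ be independent with distribution $F$ and let the price $p\sim F$ be drawn independently. Then \[\mathbb{E}_{p\sim F}\big[\mathsf{W}(p,F)\big]\ \ge\ \tfrac34\,\mathsf{OPT\text{-}W}(F).\]
   Context: Symmetric bilateral trade: $B$ (buyer's value) and $S$ (seller's value) are i.i.d. with distribution $F$. Posting price $p$, trade occurs iff $B\ge p>S$ (immaterial for continuous $F$). Welfare of price $p$: $\mathsf{W}(p,F)=\mathbb{E}[S]+\mathbb{E}[(B-S)\mathbf 1_{B\ge p>S}]$. Optimal welfare: $\mathsf{OPT\text{-}W}(F)=\mathbb{E}[S]+\mathbb{E}[(B-S)\mathbf 1_{B>S}]=\mathbb{E}[\max\{B,S\}]$. *)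

theory Defs
  imports "HOL-Probability.Probability"
begin

definition welfare :: "real measure \<Rightarrow> real \<Rightarrow> real" where
  "welfare M p = (\<integral>s. s \<partial>M) +
     (\<integral>z. (if fst z \<ge> p \<and> p > snd z then fst z - snd z else 0) \<partial>(M \<Otimes>\<^sub>M M))"

definition opt_welfare :: "real measure \<Rightarrow> real" where
  "opt_welfare M = (\<integral>s. s \<partial>M) +
     (\<integral>z. (if fst z > snd z then fst z - snd z else 0) \<partial>(M \<Otimes>\<^sub>M M))"

end

theory Submission
  imports Defs
begin


lemma (in sigma_finite_measure) swap23:
  fixes g :: "'a \<times> 'a \<times> 'a \<Rightarrow> ennreal"
  assumes g[measurable]: "g \<in> borel_measurable (M \<Otimes>\<^sub>M (M \<Otimes>\<^sub>M M))"
  shows "(\<integral>\<^sup>+w. g (fst w, snd (snd w), fst (snd w)) \<partial>(M \<Otimes>\<^sub>M (M \<Otimes>\<^sub>M M)))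
       = integral\<^sup>N (M \<Otimes>\<^sub>M (M \<Otimes>\<^sub>M M)) g"
proof -
  interpret P: pair_sigma_finite M M ..
  have MMsf: "sigma_finite_measure (M \<Otimes>\<^sub>M M)" by (rule P.sigma_finite_measure_axioms)
  have "(\<integral>\<^sup>+w. g (fst w, snd (snd w), fst (snd w)) \<partial>(M \<Otimes>\<^sub>M (M \<Otimes>\<^sub>M M)))
     = (\<integral>\<^sup>+x. \<integral>\<^sup>+v. g (x, snd v, fst v) \<partial>(M \<Otimes>\<^sub>M M) \<partial>M)"
    by (rule sigma_finite_measure.nn_integral_fst[OF MMsf, symmetric, where f="\<lambda>w. g (fst w, snd (snd w), fst (snd w))", simplified]) measurable
  also have "\<dots> = (\<integral>\<^sup>+x. \<integral>\<^sup>+v. g (x, v) \<partial>(M \<Otimes>\<^sub>M M) \<partial>M)"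
  proof (rule nn_integral_cong)
    fix x assume x: "x \<in> space M"
    have "(\<integral>\<^sup>+v. g (x, v) \<partial>(M \<Otimes>\<^sub>M M)) = (\<integral>\<^sup>+v. g (x, v) \<partial>(distr (M \<Otimes>\<^sub>M M) (M \<Otimes>\<^sub>M M) (\<lambda>(x, y). (y, x))))"
      using P.distr_pair_swap by simp
    also have "\<dots> = (\<integral>\<^sup>+v. g (x, snd v, fst v) \<partial>(M \<Otimes>\<^sub>M M))"
      using x by (subst nn_integral_distr) (auto simp: case_prod_beta)
    finally show "(\<integral>\<^sup>+v. g (x, snd v, fst v) \<partial>(M \<Otimes>\<^sub>M M)) = (\<integral>\<^sup>+v. g (x, v) \<partial>(M \<Otimes>\<^sub>M M))" by simp
  qed
  also have "\<dots> = integral\<^sup>N (M \<Otimes>\<^sub>M (M \<Otimes>\<^sub>M M)) g"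
    by (rule sigma_finite_measure.nn_integral_fst[OF MMsf]) measurable
  finally show ?thesis .
qed

lemma (in sigma_finite_measure) swap12:
  fixes g :: "'a \<times> 'a \<times> 'a \<Rightarrow> ennreal"
  assumes g[measurable]: "g \<in> borel_measurable (M \<Otimes>\<^sub>M (M \<Otimes>\<^sub>M M))"
  shows "(\<integral>\<^sup>+w. g (fst (snd w), fst w, snd (snd w)) \<partial>(M \<Otimes>\<^sub>M (M \<Otimes>\<^sub>M M)))
       = integral\<^sup>N (M \<Otimes>\<^sub>M (M \<Otimes>\<^sub>M M)) g"
proof -
  interpret P: pair_sigma_finite M M ..
  have MMsf: "sigma_finite_measure (M \<Otimes>\<^sub>M M)" by (rule P.sigma_finite_measure_axioms)
  have it: "integral\<^sup>N (M \<Otimes>\<^sub>M (M \<Otimes>\<^sub>M M)) f = (\<integral>\<^sup>+x. \<integral>\<^sup>+y. \<integral>\<^sup>+z. f (x, y, z) \<partial>M \<partial>M \<partial>M)"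
    if f[measurable]: "f \<in> borel_measurable (M \<Otimes>\<^sub>M (M \<Otimes>\<^sub>M M))" for f :: "'a \<times> 'a \<times> 'a \<Rightarrow> ennreal"
  proof -
    have "integral\<^sup>N (M \<Otimes>\<^sub>M (M \<Otimes>\<^sub>M M)) f = (\<integral>\<^sup>+x. \<integral>\<^sup>+v. f (x, v) \<partial>(M \<Otimes>\<^sub>M M) \<partial>M)"
      by (rule sigma_finite_measure.nn_integral_fst[OF MMsf, symmetric]) measurable
    also have "\<dots> = (\<integral>\<^sup>+x. \<integral>\<^sup>+y. \<integral>\<^sup>+z. f (x, y, z) \<partial>M \<partial>M \<partial>M)"
      by (rule nn_integral_cong, rule nn_integral_fst[symmetric]) measurable
    finally show ?thesis .
  qed
  have "(\<integral>\<^sup>+w. g (fst (snd w), fst w, snd (snd w)) \<partial>(M \<Otimes>\<^sub>M (M \<Otimes>\<^sub>M M)))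
      = (\<integral>\<^sup>+x. \<integral>\<^sup>+y. (\<integral>\<^sup>+z. g (y, x, z) \<partial>M) \<partial>M \<partial>M)"
    apply (subst it)
     apply measurable
    done
  also have "\<dots> = (\<integral>\<^sup>+y. \<integral>\<^sup>+x. (\<integral>\<^sup>+z. g (y, x, z) \<partial>M) \<partial>M \<partial>M)"
    by (rule P.Fubini'[symmetric]) measurable
  also have "\<dots> = integral\<^sup>N (M \<Otimes>\<^sub>M (M \<Otimes>\<^sub>M M)) g"
    by (simp add: it[OF g])
  finally show ?thesis .
qed


lemma six: "(x::ennreal)+x+x+x+x+x = 6*x"
proof -
  have "(6::ennreal) * x = (1+1+1+1+1+1) * x" by simp
  also have "\<dots> = x+x+x+x+x+x" by (simp only: distrib_right mult_1)
  finally show ?thesis by simp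
qed


lemma (in sigma_finite_measure) sym6:
  fixes g :: "'a \<times> 'a \<times> 'a \<Rightarrow> ennreal"
  assumes g[measurable]: "g \<in> borel_measurable (M \<Otimes>\<^sub>M (M \<Otimes>\<^sub>M M))"
  shows "(\<integral>\<^sup>+w. g (fst w, fst (snd w), snd (snd w)) + g (fst w, snd (snd w), fst (snd w))
     + g (fst (snd w), fst w, snd (snd w)) + g (fst (snd w), snd (snd w), fst w)
     + g (snd (snd w), fst w, fst (snd w)) + g (snd (snd w), fst (snd w), fst w) \<partial>(M \<Otimes>\<^sub>M (M \<Otimes>\<^sub>M M)))
       = 6 * integral\<^sup>N (M \<Otimes>\<^sub>M (M \<Otimes>\<^sub>M M)) g"
proof -
  let ?T = "M \<Otimes>\<^sub>M (M \<Otimes>\<^sub>M M)"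
  have e1: "(\<integral>\<^sup>+w. g (fst w, fst (snd w), snd (snd w)) \<partial>?T) = integral\<^sup>N ?T g" by simp
  have e2: "(\<integral>\<^sup>+w. g (fst w, snd (snd w), fst (snd w)) \<partial>?T) = integral\<^sup>N ?T g"
    by (rule swap23) measurable
  have e3: "(\<integral>\<^sup>+w. g (fst (snd w), fst w, snd (snd w)) \<partial>?T) = integral\<^sup>N ?T g"
    by (rule swap12) measurable
  have e4: "(\<integral>\<^sup>+w. g (fst (snd w), snd (snd w), fst w) \<partial>?T) = integral\<^sup>N ?T g"
    using swap12[of "\<lambda>w. g (fst w, snd (snd w), fst (snd w))"] e2 by simp
  have e5: "(\<integral>\<^sup>+w. g (snd (snd w), fst w, fst (snd w)) \<partial>?T) = integral\<^sup>N ?T g"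
    using swap23[of "\<lambda>w. g (fst (snd w), fst w, snd (snd w))"] e3 by simp
  have e6: "(\<integral>\<^sup>+w. g (snd (snd w), fst (snd w), fst w) \<partial>?T) = integral\<^sup>N ?T g"
    using swap23[of "\<lambda>w. g (fst (snd w), snd (snd w), fst w)"] e4 by simp
  show ?thesis
    apply (subst nn_integral_add, measurable)+
    apply (simp only: e1 e2 e3 e4 e5 e6)
    apply (simp only: six)
    done
qed


definition hh :: "real \<Rightarrow> real \<Rightarrow> real \<Rightarrow> real" where
  "hh b s p = (if b \<ge> p \<and> p > s then b - s else 0)"
definition dd :: "real \<Rightarrow> real \<Rightarrow> real" where
  "dd b s = (if b > s then b - s else 0)"
lemma pw:
  fixes a b c :: real
  assumes "a \<noteq> b" "a \<noteq> c" "b \<noteq> c"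
  shows "dd b c + dd c b + dd a c + dd c a + dd a b + dd b a
    \<le> 2 * hh b c a + 2 * hh c b a + 2 * hh a c b + 2 * hh c a b + 2 * hh a b c + 2 * hh b a c"
  using assms unfolding hh_def dd_def
  by (cases "a < b"; cases "b < c"; cases "a < c"; simp)

lemma hh_meas[measurable]:
  assumes [measurable]: "f \<in> borel_measurable N" "g \<in> borel_measurable N" "k \<in> borel_measurable N"
  shows "(\<lambda>x. hh (f x) (g x) (k x)) \<in> borel_measurable N"
  unfolding hh_def by measurable

lemma dd_meas[measurable]:
  assumes [measurable]: "f \<in> borel_measurable N" "g \<in> borel_measurable N"
  shows "(\<lambda>x. dd (f x) (g x)) \<in> borel_measurable N"
  unfolding dd_def by measurable

lemma hh_nonneg[simp]: "0 \<le> hh b s p" unfolding hh_def by auto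
lemma dd_nonneg[simp]: "0 \<le> dd b s" unfolding dd_def by auto
lemma hh_le_dd: "hh b s p \<le> dd b s" unfolding hh_def dd_def by auto

theorem theorem2:
  fixes M :: "real measure" and f :: "real \<Rightarrow> ennreal"
  assumes f_meas: "f \<in> borel_measurable borel"
    and M_def: "M = density lborel f"
    and prob: "prob_space M"
    and nonneg: "AE x in M. x \<ge> 0"
    and mean_fin: "integrable M (\<lambda>x. x)"
    and mean_pos: "(\<integral>x. x \<partial>M) > 0"
  shows "(\<integral>p. welfare M p \<partial>M) \<ge> 3 / 4 * opt_welfare M"
proof -
  have sM[measurable_cong]: "sets M = sets borel" using M_def by simp
  interpret prob_space M by (rule prob)
  interpret P: pair_sigma_finite M M ..
  have MMsf: "sigma_finite_measure (M \<Otimes>\<^sub>M M)" by (rule P.sigma_finite_measure_axioms)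
  interpret Q: pair_sigma_finite M "M \<Otimes>\<^sub>M M"
    by (intro pair_sigma_finite.intro sigma_finite_measure_axioms MMsf)
  define mu where "mu = (\<integral>x. x \<partial>M)"
  define Hn where "Hn p = (\<integral>\<^sup>+z. ennreal (hh (fst z) (snd z) p) \<partial>(M \<Otimes>\<^sub>M M))" for p
  define Dn where "Dn = (\<integral>\<^sup>+z. ennreal (dd (fst z) (snd z)) \<partial>(M \<Otimes>\<^sub>M M))"
  have HnM[measurable]: "Hn \<in> borel_measurable M"
  proof -
    have "(\<lambda>p. \<integral>\<^sup>+z. (\<lambda>w. ennreal (hh (fst (snd w)) (snd (snd w)) (fst w))) (p, z) \<partial>(M \<Otimes>\<^sub>M M)) \<in> borel_measurable M"
      by (rule sigma_finite_measure.borel_measurable_nn_integral_fst[OF MMsf]) measurable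
    then show ?thesis unfolding Hn_def by simp
  qed
  have Dn_mu: "Dn \<le> ennreal mu"
  proof -
    have "Dn = (\<integral>\<^sup>+b. \<integral>\<^sup>+s. ennreal (dd b s) \<partial>M \<partial>M)"
      unfolding Dn_def using nn_integral_fst[of "\<lambda>z. ennreal (dd (fst z) (snd z))" M] by simp
    also have "\<dots> \<le> (\<integral>\<^sup>+b. ennreal b \<partial>M)"
    proof (rule nn_integral_mono_AE)
      show "AE b in M. (\<integral>\<^sup>+s. ennreal (dd b s) \<partial>M) \<le> ennreal b"
        using nonneg
      proof eventually_elim
        fix b :: real assume b: "0 \<le> b"
        have "(\<integral>\<^sup>+s. ennreal (dd b s) \<partial>M) \<le> (\<integral>\<^sup>+s. ennreal b \<partial>M)"
          using nonneg by (intro nn_integral_mono_AE) (auto elim!: eventually_mono intro!: ennreal_leI simp: dd_def)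
        also have "\<dots> = ennreal b" by (simp add: emeasure_space_1)
        finally show "(\<integral>\<^sup>+s. ennreal (dd b s) \<partial>M) \<le> ennreal b" .
      qed
    qed
    also have "\<dots> = ennreal mu"
      unfolding mu_def by (rule nn_integral_eq_integral[OF mean_fin nonneg])
    finally show ?thesis .
  qed
  have Hn_Dn: "Hn p \<le> Dn" for p
    unfolding Hn_def Dn_def by (intro nn_integral_mono ennreal_leI hh_le_dd)
  have Dn_A: "Dn \<le> 2 * (\<integral>\<^sup>+p. Hn p \<partial>M)"
  proof -
    let ?T = "M \<Otimes>\<^sub>M (M \<Otimes>\<^sub>M M)"
    define u where "u w = ennreal (2 * hh (fst (snd w)) (snd (snd w)) (fst w))" for w :: "real \<times> real \<times> real"
    define v where "v w = ennreal (dd (fst (snd w)) (snd (snd w)))" for w :: "real \<times> real \<times> real"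
    have um[measurable]: "u \<in> borel_measurable ?T" unfolding u_def by measurable
    have vm[measurable]: "v \<in> borel_measurable ?T" unfolding v_def by measurable
    have Ju: "integral\<^sup>N ?T u = 2 * (\<integral>\<^sup>+p. Hn p \<partial>M)"
    proof -
      have "integral\<^sup>N ?T u = (\<integral>\<^sup>+p. \<integral>\<^sup>+z. u (p, z) \<partial>(M \<Otimes>\<^sub>M M) \<partial>M)"
        by (rule sigma_finite_measure.nn_integral_fst[OF MMsf, symmetric]) measurable
      also have "\<dots> = (\<integral>\<^sup>+p. 2 * Hn p \<partial>M)"
        unfolding Hn_def u_def
        by (intro nn_integral_cong) (simp add: ennreal_mult nn_integral_cmult)
      also have "\<dots> = 2 * (\<integral>\<^sup>+p. Hn p \<partial>M)"
        by (rule nn_integral_cmult) measurable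
      finally show ?thesis .
    qed
    have Jv: "integral\<^sup>N ?T v = Dn"
    proof -
      have "integral\<^sup>N ?T v = (\<integral>\<^sup>+p. \<integral>\<^sup>+z. v (p, z) \<partial>(M \<Otimes>\<^sub>M M) \<partial>M)"
        by (rule sigma_finite_measure.nn_integral_fst[OF MMsf, symmetric]) measurable
      also have "\<dots> = (\<integral>\<^sup>+p. Dn \<partial>M)"
        unfolding Dn_def v_def by simp
      also have "\<dots> = Dn" by (simp add: emeasure_space_1)
      finally show ?thesis .
    qed
    have sing: "AE y in M. y \<noteq> x" for x
      unfolding M_def using AE_lborel_singleton[of x]
      by (subst AE_density) (use f_meas in simp, auto elim!: eventually_mono)
    have AE3: "AE a in M. AE b in M. AE c in M. a \<noteq> b \<and> a \<noteq> c \<and> b \<noteq> c"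
    proof (rule AE_I2)
      fix a
      show "AE b in M. AE c in M. a \<noteq> b \<and> a \<noteq> c \<and> b \<noteq> c"
        using sing[of a]
      proof eventually_elim
        fix b assume ba: "b \<noteq> a"
        show "AE c in M. a \<noteq> b \<and> a \<noteq> c \<and> b \<noteq> c"
          using sing[of a] sing[of b] by eventually_elim (use ba in auto)
      qed
    qed
    have AET: "AE w in ?T. fst w \<noteq> fst (snd w) \<and> fst w \<noteq> snd (snd w) \<and> fst (snd w) \<noteq> snd (snd w)"
    proof (rule Q.AE_pair_measure)
      show "{x \<in> space ?T. fst x \<noteq> fst (snd x) \<and> fst x \<noteq> snd (snd x) \<and> fst (snd x) \<noteq> snd (snd x)} \<in> sets ?T"
        by measurable
      show "AE x in M. AE y in M \<Otimes>\<^sub>M M. fst (x, y) \<noteq> fst (snd (x, y)) \<and> fst (x, y) \<noteq> snd (snd (x, y)) \<and> fst (snd (x, y)) \<noteq> snd (snd (x, y))"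
        using AE3
      proof eventually_elim
        fix a assume aea: "AE b in M. AE c in M. a \<noteq> b \<and> a \<noteq> c \<and> b \<noteq> c"
        have sm: "{x \<in> space (M \<Otimes>\<^sub>M M). a \<noteq> fst x \<and> a \<noteq> snd x \<and> fst x \<noteq> snd x} \<in> sets (M \<Otimes>\<^sub>M M)"
          by measurable
        have "AE y in M \<Otimes>\<^sub>M M. a \<noteq> fst y \<and> a \<noteq> snd y \<and> fst y \<noteq> snd y"
          by (rule P.AE_pair_measure[OF sm]) (simp only: fst_conv snd_conv, rule aea)
        then show "AE y in M \<Otimes>\<^sub>M M. fst (a, y) \<noteq> fst (snd (a, y)) \<and> fst (a, y) \<noteq> snd (snd (a, y)) \<and> fst (snd (a, y)) \<noteq> snd (snd (a, y))"
          by simp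
      qed
    qed
    have "6 * integral\<^sup>N ?T v \<le> 6 * integral\<^sup>N ?T u"
      unfolding sym6[OF vm, symmetric] sym6[OF um, symmetric]
    proof (rule nn_integral_mono_AE)
      show "AE w in ?T. v (fst w, fst (snd w), snd (snd w)) + v (fst w, snd (snd w), fst (snd w)) +
            v (fst (snd w), fst w, snd (snd w)) + v (fst (snd w), snd (snd w), fst w) +
            v (snd (snd w), fst w, fst (snd w)) + v (snd (snd w), fst (snd w), fst w)
          \<le> u (fst w, fst (snd w), snd (snd w)) + u (fst w, snd (snd w), fst (snd w)) +
            u (fst (snd w), fst w, snd (snd w)) + u (fst (snd w), snd (snd w), fst w) +
            u (snd (snd w), fst w, fst (snd w)) + u (snd (snd w), fst (snd w), fst w)"
        using AET
      proof eventually_elim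
        fix w :: "real \<times> real \<times> real"
        obtain a b c where w: "w = (a, b, c)" by (cases w) auto
        assume "fst w \<noteq> fst (snd w) \<and> fst w \<noteq> snd (snd w) \<and> fst (snd w) \<noteq> snd (snd w)"
        then have d: "a \<noteq> b" "a \<noteq> c" "b \<noteq> c" using w by auto
        have "ennreal (dd b c + dd c b + dd a c + dd c a + dd a b + dd b a)
          \<le> ennreal (2 * hh b c a + 2 * hh c b a + 2 * hh a c b + 2 * hh c a b + 2 * hh a b c + 2 * hh b a c)"
          by (rule ennreal_leI, rule pw[OF d])
        then show "v (fst w, fst (snd w), snd (snd w)) + v (fst w, snd (snd w), fst (snd w)) +
            v (fst (snd w), fst w, snd (snd w)) + v (fst (snd w), snd (snd w), fst w) +
            v (snd (snd w), fst w, fst (snd w)) + v (snd (snd w), fst (snd w), fst w)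
          \<le> u (fst w, fst (snd w), snd (snd w)) + u (fst w, snd (snd w), fst (snd w)) +
            u (fst (snd w), fst w, snd (snd w)) + u (fst (snd w), snd (snd w), fst w) +
            u (snd (snd w), fst w, fst (snd w)) + u (snd (snd w), fst (snd w), fst w)"
          unfolding w u_def v_def by (simp add: ennreal_plus del: ennreal_plus[symmetric])
      qed
    qed
    then have "integral\<^sup>N ?T v \<le> integral\<^sup>N ?T u"
      by (subst (asm) ennreal_mult_le_mult_iff) auto
    then show ?thesis using Ju Jv by simp
  qed
  have Dn_fin: "Dn < top" using Dn_mu by (simp add: le_less_trans)
  have Hn_fin: "Hn p < top" for p using Hn_Dn[of p] Dn_fin by (rule le_less_trans)
  define A where "A = (\<integral>\<^sup>+p. Hn p \<partial>M)"
  have A_Dn: "A \<le> Dn"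
  proof -
    have "A \<le> (\<integral>\<^sup>+p. Dn \<partial>M)" unfolding A_def by (intro nn_integral_mono Hn_Dn)
    also have "\<dots> = Dn" by (simp add: emeasure_space_1)
    finally show ?thesis .
  qed
  have A_fin: "A < top" using A_Dn Dn_fin by (rule le_less_trans)
  have opt: "opt_welfare M = mu + enn2real Dn"
  proof -
    have "(\<lambda>z::real\<times>real. if fst z > snd z then fst z - snd z else 0) = (\<lambda>z. dd (fst z) (snd z))"
      by (simp add: dd_def fun_eq_iff)
    moreover have "(\<integral>z. dd (fst z) (snd z) \<partial>(M \<Otimes>\<^sub>M M)) = enn2real Dn"
      unfolding Dn_def by (rule integral_eq_nn_integral) auto
    ultimately show ?thesis unfolding opt_welfare_def mu_def by simp
  qed
  have wel: "welfare M p = mu + enn2real (Hn p)" for p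
  proof -
    have "(\<lambda>z::real\<times>real. if fst z \<ge> p \<and> p > snd z then fst z - snd z else 0) = (\<lambda>z. hh (fst z) (snd z) p)"
      by (simp add: hh_def fun_eq_iff)
    moreover have "(\<integral>z. hh (fst z) (snd z) p \<partial>(M \<Otimes>\<^sub>M M)) = enn2real (Hn p)"
      unfolding Hn_def by (rule integral_eq_nn_integral) auto
    ultimately show ?thesis unfolding welfare_def mu_def by simp
  qed
  have intH: "integrable M (\<lambda>p. enn2real (Hn p))"
  proof (rule integrable_const_bound[where B="enn2real Dn"])
    show "AE p in M. norm (enn2real (Hn p)) \<le> enn2real Dn"
      using Hn_Dn Dn_fin by (auto intro!: AE_I2 enn2real_mono)
  qed measurable
  have intH_eq: "(\<integral>p. enn2real (Hn p) \<partial>M) = enn2real A"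
  proof -
    have "(\<integral>p. enn2real (Hn p) \<partial>M) = enn2real (\<integral>\<^sup>+p. ennreal (enn2real (Hn p)) \<partial>M)"
      by (rule integral_eq_nn_integral) auto
    also have "(\<integral>\<^sup>+p. ennreal (enn2real (Hn p)) \<partial>M) = A"
      unfolding A_def using Hn_fin by (intro nn_integral_cong) (simp add: ennreal_enn2real less_top)
    finally show ?thesis .
  qed
  have lhs: "(\<integral>p. welfare M p \<partial>M) = mu + enn2real A"
    unfolding wel using intH intH_eq by (simp add: integral_add prob_space)
  have k1: "enn2real Dn \<le> 2 * enn2real A"
  proof -
    have "enn2real Dn \<le> enn2real (2 * A)"
      using Dn_A A_fin by (intro enn2real_mono) (auto simp: ennreal_mult_less_top A_def)
    then show ?thesis by (simp add: enn2real_mult)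
  qed
  have k2: "enn2real Dn \<le> mu"
  proof -
    have "enn2real Dn \<le> enn2real (ennreal mu)"
      using Dn_mu by (intro enn2real_mono) auto
    then show ?thesis using mean_pos unfolding mu_def by simp
  qed
  have "3 / 4 * (mu + enn2real Dn) = 3 / 4 * mu + 3 / 4 * enn2real Dn" by (simp add: distrib_left)
  then show ?thesis unfolding lhs opt using k1 k2 by linarith
qed

end
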